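(* Let $G$ be a connected graph and let $H$ be a graph (not necessarily connected) that is not complete. Then $$\dim_{n\ell}(G\odot H)=n(G)\cdot \dim_{n\ell}(H+K_1).$$
   Context: Graphs are finite and simple; $d(u,v)$ is the shortest-path distance and $n(G)$ the number of vertices. A set $X\subseteq V(G)$ resolves two vertices $u,v$ if some $x\in X$ satisfies $d(u,x)\neq d(v,x)$. $X$ is a nonlocal resolving set of a connected graph if it resolves every pair of distinct non-adjacent vertices; the nonlocal metric dimension $\dim_{n\ell}$ is the minimum size of a nonlocal resolving set. The join $G+H$ is obtained from disjoint copies of $G$ and $H$ by adding all edges between them. For $V(G)=\{g_1,\dots,g_{n(G)}\}$, the corona product $G\odot H$ is obtained from the disjoint union of $G$ and $n(G)$ copies $H_1,\dots,H_{n(G)}$ of $H$ by joining $g_i$ to every vertex of $H_i$ for each $i$. *)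

theory Defs
  imports Main
begin

type_synonym 'a graph = "'a set \<times> ('a \<Rightarrow> 'a \<Rightarrow> bool)"

definition verts :: "'a graph \<Rightarrow> 'a set" where "verts G = fst G"
definition adj :: "'a graph \<Rightarrow> 'a \<Rightarrow> 'a \<Rightarrow> bool" where "adj G = snd G"

definition simple_graph :: "'a graph \<Rightarrow> bool" where
  "simple_graph G \<longleftrightarrow> finite (verts G) \<and>
     (\<forall>u v. adj G u v \<longrightarrow> u \<in> verts G \<and> v \<in> verts G \<and> u \<noteq> v \<and> adj G v u)"

fun walk_in :: "'a graph \<Rightarrow> 'a list \<Rightarrow> bool" where
  "walk_in G [] = False"
| "walk_in G [v] = (v \<in> verts G)"
| "walk_in G (u # v # xs) = (adj G u v \<and> walk_in G (v # xs))"

definition dist :: "'a graph \<Rightarrow> 'a \<Rightarrow> 'a \<Rightarrow> nat" where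
  "dist G u v = (LEAST n. \<exists>p. walk_in G p \<and> hd p = u \<and> last p = v \<and> length p = Suc n)"

definition connected_graph :: "'a graph \<Rightarrow> bool" where
  "connected_graph G \<longleftrightarrow> verts G \<noteq> {} \<and>
     (\<forall>u\<in>verts G. \<forall>v\<in>verts G. \<exists>p. walk_in G p \<and> hd p = u \<and> last p = v)"

definition complete_graph :: "'a graph \<Rightarrow> bool" where
  "complete_graph G \<longleftrightarrow> (\<forall>u\<in>verts G. \<forall>v\<in>verts G. u \<noteq> v \<longrightarrow> adj G u v)"

definition resolves :: "'a graph \<Rightarrow> 'a set \<Rightarrow> 'a \<Rightarrow> 'a \<Rightarrow> bool" where
  "resolves G X u v \<longleftrightarrow> (\<exists>x\<in>X. dist G u x \<noteq> dist G v x)"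

definition nonlocal_resolving_set :: "'a graph \<Rightarrow> 'a set \<Rightarrow> bool" where
  "nonlocal_resolving_set G X \<longleftrightarrow> X \<subseteq> verts G \<and>
     (\<forall>u\<in>verts G. \<forall>v\<in>verts G. u \<noteq> v \<and> \<not> adj G u v \<longrightarrow> resolves G X u v)"

definition nl_dim :: "'a graph \<Rightarrow> nat" where
  "nl_dim G = (LEAST k. \<exists>X. nonlocal_resolving_set G X \<and> card X = k)"

definition join :: "'a graph \<Rightarrow> 'b graph \<Rightarrow> ('a + 'b) graph" where
  "join G H = (Inl ` verts G \<union> Inr ` verts H,
     (\<lambda>x y. case (x, y) of
        (Inl a, Inl b) \<Rightarrow> adj G a b
      | (Inr a, Inr b) \<Rightarrow> adj H a b
      | (Inl a, Inr b) \<Rightarrow> a \<in> verts G \<and> b \<in> verts H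
      | (Inr a, Inl b) \<Rightarrow> a \<in> verts H \<and> b \<in> verts G))"

definition K1 :: "unit graph" where
  "K1 = ({()}, \<lambda>_ _. False)"

text \<open>Corona G \<odot> H: vertex Inl g is g; vertex Inr (g, h) is the copy of h in H_g.\<close>
definition corona :: "'a graph \<Rightarrow> 'b graph \<Rightarrow> ('a + 'a \<times> 'b) graph" where
  "corona G H = (Inl ` verts G \<union> Inr ` (verts G \<times> verts H),
     (\<lambda>x y. case (x, y) of
        (Inl a, Inl b) \<Rightarrow> adj G a b
      | (Inr (g, h), Inr (g', h')) \<Rightarrow> g = g' \<and> g \<in> verts G \<and> adj H h h'
      | (Inl a, Inr (g, h)) \<Rightarrow> a = g \<and> a \<in> verts G \<and> h \<in> verts H
      | (Inr (g, h), Inl a) \<Rightarrow> a = g \<and> a \<in> verts G \<and> h \<in> verts H))"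

end

theory Submission
  imports Defs
begin


definition reach :: "'a graph \<Rightarrow> 'a \<Rightarrow> 'a \<Rightarrow> bool" where
  "reach G u v = (\<exists>p. walk_in G p \<and> hd p = u \<and> last p = v)"

lemma walk_nonempty: "walk_in G p \<Longrightarrow> p \<noteq> []" by (cases p) auto

lemma walk_verts: "simple_graph G \<Longrightarrow> walk_in G p \<Longrightarrow> set p \<subseteq> verts G"
  by (induction G p rule: walk_in.induct) (auto simp: simple_graph_def)

lemma walk_append: "walk_in G (xs @ [v]) \<Longrightarrow> walk_in G (v # ys) \<Longrightarrow> walk_in G (xs @ v # ys)"
proof (induction xs)
  case Nil then show ?case by simp
next
  case (Cons a xs) then show ?case by (cases xs) auto
qed

lemma walk_suffix: "walk_in G (xs @ ys) \<Longrightarrow> ys \<noteq> [] \<Longrightarrow> walk_in G ys"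
proof (induction xs)
  case Nil then show ?case by simp
next
  case (Cons a xs) then show ?case by (cases "xs @ ys") auto
qed

lemma walk_rev: "simple_graph G \<Longrightarrow> walk_in G p \<Longrightarrow> walk_in G (rev p)"
proof (induction G p rule: walk_in.induct)
  case (3 G u v xs)
  then have w: "walk_in G (rev xs @ [v])" by simp
  have "adj G v u" using 3 by (auto simp: simple_graph_def)
  moreover have "u \<in> verts G" using 3 by (auto simp: simple_graph_def)
  ultimately have "walk_in G [v, u]" by simp
  from walk_append[OF w this] show ?case by simp
qed auto

lemma reach_sym: "simple_graph G \<Longrightarrow> reach G u v \<Longrightarrow> reach G v u"
  unfolding reach_def
  by (metis walk_rev hd_rev last_rev)

lemma reach_trans: assumes "reach G u v" "reach G v w" shows "reach G u w"
proof -
  obtain p where p: "walk_in G p" "hd p = u" "last p = v" using assms(1) reach_def by metis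
  obtain q where q: "walk_in G q" "hd q = v" "last q = w" using assms(2) reach_def by metis
  have pn: "p \<noteq> []" "q \<noteq> []" using p q walk_nonempty by auto
  have pe: "p = butlast p @ [v]" using pn p by (metis append_butlast_last_id)
  have qe: "q = v # tl q" using pn q by (cases q) auto
  have "walk_in G (butlast p @ v # tl q)"
    using walk_append[of G "butlast p" v "tl q"] p q pe qe by metis
  moreover have "hd (butlast p @ v # tl q) = u"
  proof (cases "butlast p")
    case Nil then show ?thesis using p pe by (metis append.left_neutral list.sel(1))
  next
    case (Cons a l) then show ?thesis using p pe by (metis append_Cons list.sel(1))
  qed
  moreover have "last (butlast p @ v # tl q) = w"
    using q qe by (metis last_appendR list.simps(3))
  ultimately show ?thesis unfolding reach_def by blast
qed

lemma reach_adj: "adj G u v \<Longrightarrow> v \<in> verts G \<Longrightarrow> reach G u v"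
  unfolding reach_def by (rule exI[of _ "[u,v]"]) simp

lemma reach_refl: "u \<in> verts G \<Longrightarrow> reach G u u"
  unfolding reach_def by (rule exI[of _ "[u]"]) simp

lemma dist_le: assumes "walk_in G p" "hd p = u" "last p = v" shows "dist G u v \<le> length p - 1"
proof -
  have "length p = Suc (length p - 1)" using walk_nonempty[OF assms(1)] by (cases p) auto
  then show ?thesis unfolding dist_def using assms by (intro Least_le) blast
qed

lemma dist_ex: "reach G u v \<Longrightarrow> \<exists>p. walk_in G p \<and> hd p = u \<and> last p = v \<and> length p = Suc (dist G u v)"
proof -
  assume "reach G u v"
  then obtain p where p: "walk_in G p" "hd p = u" "last p = v" unfolding reach_def by blast
  have "length p = Suc (length p - 1)" using walk_nonempty[OF p(1)] by (cases p) auto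
  then have "\<exists>n p. walk_in G p \<and> hd p = u \<and> last p = v \<and> length p = Suc n" using p by blast
  from LeastI_ex[OF this] show ?thesis unfolding dist_def .
qed

lemma dist_0: "reach G u v \<Longrightarrow> dist G u v = 0 \<Longrightarrow> u = v"
  using dist_ex[of G u v] by (auto simp: length_Suc_conv)

lemma dist_1: "reach G u v \<Longrightarrow> dist G u v = 1 \<Longrightarrow> adj G u v"
  using dist_ex[of G u v] by (auto simp: length_Suc_conv)

lemma dist_self: "u \<in> verts G \<Longrightarrow> dist G u u = 0"
  using dist_le[of G "[u]" u u] by simp

lemma dist_adj_le: "adj G u v \<Longrightarrow> v \<in> verts G \<Longrightarrow> dist G u v \<le> 1"
  using dist_le[of G "[u,v]" u v] by simp

lemma dist_adj: "adj G u v \<Longrightarrow> v \<in> verts G \<Longrightarrow> u \<noteq> v \<Longrightarrow> dist G u v = 1"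
  using dist_adj_le[of G u v] dist_0[OF reach_adj, of G u v] by fastforce

lemma dist_sym_le: assumes "simple_graph G" "reach G v u" shows "dist G u v \<le> dist G v u"
proof -
  obtain p where p: "walk_in G p" "hd p = v" "last p = u" "length p = Suc (dist G v u)"
    using dist_ex assms(2) by metis
  have "dist G u v \<le> length (rev p) - 1"
    using p walk_rev[OF assms(1) p(1)] walk_nonempty[OF p(1)] by (intro dist_le) (auto simp: hd_rev last_rev)
  then show ?thesis using p by simp
qed

lemma dist_sym: assumes "simple_graph G" shows "dist G u v = dist G v u"
proof (cases "reach G v u")
  case True
  then have "reach G u v" using reach_sym assms by metis
  then show ?thesis using dist_sym_le[OF assms] True by (simp add: le_antisym)
next
  case False
  then have F: "\<not> reach G u v" using reach_sym assms by metis
  have "(\<lambda>n. \<exists>p. walk_in G p \<and> hd p = u \<and> last p = v \<and> length p = Suc n)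
      = (\<lambda>n. \<exists>p. walk_in G p \<and> hd p = v \<and> last p = u \<and> length p = Suc n)"
    using F False unfolding reach_def by blast
  then show ?thesis unfolding dist_def by simp
qed

lemma walk_hits:
  assumes cut: "\<forall>a\<in>S. \<forall>b. adj G a b \<longrightarrow> b \<in> S \<or> b = g"
  shows "walk_in G p \<Longrightarrow> hd p \<in> S \<Longrightarrow> last p \<notin> S \<Longrightarrow> g \<in> set p"
proof (induction p)
  case Nil then show ?case by simp
next
  case (Cons u rest)
  show ?case
  proof (cases rest)
    case Nil then show ?thesis using Cons by simp
  next
    case (Cons v xs)
    note c = Cons.prems[unfolded Cons]
    show ?thesis
    proof (cases "v = g")
      case False
      have "adj G u v" "u \<in> S" using c by auto
      then have "v \<in> S" using cut False by blast
      then have "g \<in> set (v # xs)" using Cons.IH c Cons by auto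
      then show ?thesis using Cons by simp
    qed (simp add: Cons)
  qed
qed

lemma dist_cut:
  assumes cut: "\<forall>a\<in>S. \<forall>b. adj G a b \<longrightarrow> b \<in> S \<or> b = g"
    and "g \<notin> S" "u \<in> S" "x \<notin> S" "reach G u x" "adj G u g" "reach G g x" "g \<in> verts G"
  shows "dist G u x = Suc (dist G g x)"
proof -
  obtain p where p: "walk_in G p" "hd p = u" "last p = x" "length p = Suc (dist G u x)"
    using dist_ex assms(5) by metis
  have "g \<in> set p" using walk_hits[OF cut p(1)] p assms by simp
  then obtain xs ys where pe: "p = xs @ g # ys" by (meson split_list)
  have "xs \<noteq> []" using pe p(2) assms by auto
  have "walk_in G (g # ys)" using walk_suffix[of G xs "g # ys"] p pe by simp
  moreover have "last (g # ys) = x" using p(3) pe by simp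
  ultimately have "dist G g x \<le> length (g # ys) - 1" by (intro dist_le) auto
  moreover have "length p = length xs + Suc (length ys)" using pe by simp
  moreover have "length xs \<ge> 1" using \<open>xs \<noteq> []\<close> by (cases xs) auto
  ultimately have ge: "Suc (dist G g x) \<le> dist G u x" using p(4) by simp
  obtain q where q: "walk_in G q" "hd q = g" "last q = x" "length q = Suc (dist G g x)"
    using dist_ex assms(7) by metis
  have qe: "q = g # tl q" using q walk_nonempty by (cases q) auto
  have w: "walk_in G ([u] @ g # tl q)" using walk_append[of G "[u]" g "tl q"] q qe assms by simp
  have l: "last ([u] @ g # tl q) = x" using q(3) qe by (metis append_Cons append_Nil last_ConsR list.distinct(1))
  have "dist G u x \<le> length ([u] @ g # tl q) - 1" by (rule dist_le[OF w _ l]) simp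
  moreover have "length (tl q) = dist G g x" using q by simp
  ultimately have "dist G u x \<le> Suc (dist G g x)" by simp
  with ge show ?thesis by simp
qed



lemma verts_corona: "verts (corona G H) = Inl ` verts G \<union> Inr ` (verts G \<times> verts H)"
  by (simp add: corona_def verts_def)
lemma adj_corona[simp]:
  "adj (corona G H) (Inl a) (Inl b) = adj G a b"
  "adj (corona G H) (Inr (g,h)) (Inr (g',h')) = (g = g' \<and> g \<in> verts G \<and> adj H h h')"
  "adj (corona G H) (Inl a) (Inr (g,h)) = (a = g \<and> a \<in> verts G \<and> h \<in> verts H)"
  "adj (corona G H) (Inr (g,h)) (Inl a) = (a = g \<and> a \<in> verts G \<and> h \<in> verts H)"
  by (simp_all add: corona_def adj_def)

lemma verts_join: "verts (join H K1) = Inl ` verts H \<union> {Inr ()}"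
  by (simp add: join_def verts_def K1_def)
lemma adj_join[simp]:
  "adj (join H K1) (Inl a) (Inl b) = adj H a b"
  "adj (join H K1) (Inr u) (Inr v) = False"
  "adj (join H K1) (Inl a) (Inr u) = (a \<in> verts H)"
  "adj (join H K1) (Inr u) (Inl a) = (a \<in> verts H)"
  by (simp_all add: join_def adj_def K1_def verts_def)

lemma simple_corona: "simple_graph G \<Longrightarrow> simple_graph H \<Longrightarrow> simple_graph (corona G H)"
  unfolding simple_graph_def
  apply (intro conjI)
   apply (simp add: verts_corona)
  apply (intro allI impI)
  subgoal for u v
    by (cases u; cases v) (auto simp: verts_corona, blast+)
  done

lemma simple_join: "simple_graph H \<Longrightarrow> simple_graph (join H K1)"
  unfolding simple_graph_def
  apply (intro conjI)
   apply (simp add: verts_join)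
  apply (intro allI impI)
  subgoal for u v
    by (cases u; cases v) (auto simp: verts_join)
  done

lemma dist_012:
  assumes "simple_graph G'" "u \<in> verts G'" "v \<in> verts G'" "w \<in> verts G'"
    "u = v \<or> adj G' u v \<or> (adj G' u w \<and> adj G' w v)"
  shows "dist G' u v = (if u = v then 0 else if adj G' u v then 1 else 2)"
proof (cases "u = v")
  case True then show ?thesis using dist_self assms by simp
next
  case F: False
  show ?thesis
  proof (cases "adj G' u v")
    case True then show ?thesis using dist_adj assms F by simp
  next
    case False
    then have a: "adj G' u w" "adj G' w v" using assms F by auto
    have wk: "walk_in G' [u, w, v]" using a assms by simp
    have "dist G' u v \<le> length [u,w,v] - 1" by (rule dist_le[OF wk]) simp_all
    then have "dist G' u v \<le> 2" by simp
    moreover have r: "reach G' u v" using wk unfolding reach_def by (intro exI[of _ "[u,w,v]"]) simp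
    moreover have "dist G' u v \<noteq> 0" using dist_0[OF r] F by auto
    moreover have "dist G' u v \<noteq> 1" using dist_1[OF r] False by auto
    ultimately show ?thesis using F False by simp
  qed
qed

definition cd :: "'b graph \<Rightarrow> 'b \<Rightarrow> 'b \<Rightarrow> nat" where
  "cd H a b = (if a = b then 0 else if adj H a b then 1 else 2)"

definition Hres :: "'b graph \<Rightarrow> 'b set \<Rightarrow> bool" where
  "Hres H Y \<longleftrightarrow> Y \<subseteq> verts H \<and>
     (\<forall>a\<in>verts H. \<forall>b\<in>verts H. a \<noteq> b \<and> \<not> adj H a b \<longrightarrow> (\<exists>y\<in>Y. cd H a y \<noteq> cd H b y))"

lemma cd_le: "cd H a b \<le> 2" by (simp add: cd_def)

lemma dist_J: assumes "simple_graph H" "a \<in> verts H" "y \<in> verts H"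
  shows "dist (join H K1) (Inl a) (Inl y) = cd H a y"
  using dist_012[OF simple_join[OF assms(1)], of "Inl a" "Inl y" "Inr ()"] assms
  by (auto simp: verts_join cd_def)

lemma dist_J2: assumes "simple_graph H" "a \<in> verts H"
  shows "dist (join H K1) (Inl a) (Inr ()) = 1"
  using dist_adj[of "join H K1" "Inl a" "Inr ()"] assms by (auto simp: verts_join)

lemma Hres_J1: assumes "simple_graph H" "nonlocal_resolving_set (join H K1) X"
  shows "Hres H {h. Inl h \<in> X}"
  unfolding Hres_def
proof (intro conjI ballI impI)
  show "{h. Inl h \<in> X} \<subseteq> verts H" using assms(2)
    by (auto simp: nonlocal_resolving_set_def verts_join)
  fix a b assume ab: "a \<in> verts H" "b \<in> verts H" "a \<noteq> b \<and> \<not> adj H a b"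
  then have "resolves (join H K1) X (Inl a) (Inl b)" using assms(2)
    by (auto simp: nonlocal_resolving_set_def verts_join)
  then obtain x where x: "x \<in> X" "dist (join H K1) (Inl a) x \<noteq> dist (join H K1) (Inl b) x"
    unfolding resolves_def by blast
  have "x \<in> verts (join H K1)" using x assms(2) by (auto simp: nonlocal_resolving_set_def)
  then consider y where "x = Inl y" "y \<in> verts H" | "x = Inr ()" by (auto simp: verts_join)
  then show "\<exists>y\<in>{h. Inl h \<in> X}. cd H a y \<noteq> cd H b y"
  proof cases
    case 1 then show ?thesis using x dist_J[OF assms(1)] ab by auto
  next
    case 2 then show ?thesis using x dist_J2[OF assms(1)] ab by auto
  qed
qed

lemma Hres_J2: assumes "simple_graph H" "Hres H Y"
  shows "nonlocal_resolving_set (join H K1) (Inl ` Y)"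
  unfolding nonlocal_resolving_set_def
proof (intro conjI ballI impI)
  show "Inl ` Y \<subseteq> verts (join H K1)" using assms(2) by (auto simp: Hres_def verts_join)
  fix u v assume uv: "u \<in> verts (join H K1)" "v \<in> verts (join H K1)"
    "u \<noteq> v \<and> \<not> adj (join H K1) u v"
  then obtain a b where ab: "u = Inl a" "v = Inl b" "a \<in> verts H" "b \<in> verts H"
    by (auto simp: verts_join)
  then have "a \<noteq> b" "\<not> adj H a b" using uv by auto
  then obtain y where y: "y \<in> Y" "cd H a y \<noteq> cd H b y" using assms(2) ab unfolding Hres_def by blast
  have "y \<in> verts H" using y assms(2) by (auto simp: Hres_def)
  then show "resolves (join H K1) (Inl ` Y) u v"
    unfolding resolves_def using y ab dist_J[OF assms(1)] by (intro bexI[of _ "Inl y"]) auto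
qed

lemma Hres_verts: "Hres H (verts H)"
  unfolding Hres_def cd_def by (auto intro!: bexI)



lemma walk_lift: "walk_in G p \<Longrightarrow> walk_in (corona G H) (map Inl p)"
  by (induction G p rule: walk_in.induct) (auto simp: verts_corona)

context
  fixes G :: "'a graph" and H :: "'b graph"
  assumes sG: "simple_graph G" and cG: "connected_graph G" and sH: "simple_graph H"
begin

abbreviation "C \<equiv> corona G H"

lemma sC: "simple_graph C" using simple_corona sG sH by blast

lemma reach_Inl: "a \<in> verts G \<Longrightarrow> b \<in> verts G \<Longrightarrow> reach C (Inl a) (Inl b)"
proof -
  assume ab: "a \<in> verts G" "b \<in> verts G"
  then obtain p where p: "walk_in G p" "hd p = a" "last p = b"
    using cG unfolding connected_graph_def by blast
  have "p \<noteq> []" using p walk_nonempty by auto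
  then show ?thesis unfolding reach_def using p walk_lift[OF p(1)]
    by (intro exI[of _ "map Inl p"]) (simp add: hd_map last_map)
qed

lemma reach_C: assumes "w \<in> verts C" "z \<in> verts C" shows "reach C w z"
proof -
  have base: "\<exists>g\<in>verts G. reach C w (Inl g)" if "w \<in> verts C" for w
  proof -
    from that consider g where "w = Inl g" "g \<in> verts G"
      | g h where "w = Inr (g,h)" "g \<in> verts G" "h \<in> verts H"
      by (auto simp: verts_corona)
    then show ?thesis
    proof cases
      case 1 then show ?thesis using reach_refl[of "Inl g" C] by (auto simp: verts_corona)
    next
      case 2 then show ?thesis using reach_adj[of C w "Inl g"] by (auto simp: verts_corona)
    qed
  qed
  obtain g1 where g1: "g1 \<in> verts G" "reach C w (Inl g1)" using base assms(1) by blast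
  obtain g2 where g2: "g2 \<in> verts G" "reach C z (Inl g2)" using base assms(2) by blast
  have "reach C (Inl g2) z" using reach_sym[OF sC g2(2)] .
  then show ?thesis using reach_trans[OF reach_trans[OF g1(2) reach_Inl[OF g1(1) g2(1)]]] by blast
qed

definition S :: "'a \<Rightarrow> ('a + 'a \<times> 'b) set" where "S g = Inr ` ({g} \<times> verts H)"

lemma cutC: assumes "g \<in> verts G" "h \<in> verts H" "x \<in> verts C" "x \<notin> S g"
  shows "dist C (Inr (g,h)) x = Suc (dist C (Inl g) x)"
proof (rule dist_cut[where S = "S g"])
  show "\<forall>a\<in>S g. \<forall>b. adj C a b \<longrightarrow> b \<in> S g \<or> b = Inl g"
  proof (intro ballI allI impI)
    fix a b assume a: "a \<in> S g" and ab: "adj C a b"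
    obtain h1 where h1: "a = Inr (g, h1)" using a by (auto simp: S_def)
    show "b \<in> S g \<or> b = Inl g"
    proof (cases b)
      case (Inl c) then show ?thesis using ab h1 by simp
    next
      case (Inr p) then obtain g' h' where "b = Inr (g', h')" by (cases p) auto
      then show ?thesis using ab h1 sH by (auto simp: S_def simple_graph_def)
    qed
  qed
  show "Inl g \<notin> S g" by (auto simp: S_def)
  show "Inr (g, h) \<in> S g" using assms by (auto simp: S_def)
  show "x \<notin> S g" by fact
  show "reach C (Inr (g, h)) x" using reach_C assms by (auto simp: verts_corona)
  show "adj C (Inr (g, h)) (Inl g)" using assms by simp
  show "reach C (Inl g) x" using reach_C assms by (auto simp: verts_corona)
  show "Inl g \<in> verts C" using assms by (auto simp: verts_corona)
qed

lemma dist_C: assumes "g \<in> verts G" "a \<in> verts H" "y \<in> verts H"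
  shows "dist C (Inr (g,a)) (Inr (g,y)) = cd H a y"
  using dist_012[OF sC, of "Inr (g,a)" "Inr (g,y)" "Inl g"] assms
  by (auto simp: verts_corona cd_def)

lemma E: assumes "g \<in> verts G" "g' \<in> verts G" "g \<noteq> g'" "b \<in> verts H"
  shows "dist C (Inr (g',b)) (Inl g) \<ge> 2"
proof -
  have "dist C (Inr (g',b)) (Inl g) = Suc (dist C (Inl g') (Inl g))"
    using cutC[of g' b "Inl g"] assms by (auto simp: verts_corona S_def)
  moreover have "dist C (Inl g') (Inl g) \<noteq> 0"
    using dist_0[OF reach_Inl[OF assms(2,1)]] assms by auto
  ultimately show ?thesis by simp
qed

lemma far: assumes "g \<in> verts G" "g' \<in> verts G" "g \<noteq> g'" "b \<in> verts H" "y \<in> verts H"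
  shows "dist C (Inr (g',b)) (Inr (g,y)) \<ge> 3"
proof -
  have "dist C (Inr (g',b)) (Inr (g,y)) = dist C (Inr (g,y)) (Inr (g',b))" using dist_sym[OF sC] .
  also have "\<dots> = Suc (dist C (Inl g) (Inr (g',b)))"
    using cutC[of g y "Inr (g',b)"] assms by (auto simp: verts_corona S_def)
  also have "dist C (Inl g) (Inr (g',b)) = dist C (Inr (g',b)) (Inl g)" using dist_sym[OF sC] .
  finally show ?thesis using E[OF assms(1-4)] by simp
qed

lemma far2: assumes "g \<in> verts G" "g' \<in> verts G" "g \<noteq> g'" "y \<in> verts H"
  shows "dist C (Inl g') (Inr (g,y)) \<ge> 2"
proof -
  have "dist C (Inl g') (Inr (g,y)) = dist C (Inr (g,y)) (Inl g')" using dist_sym[OF sC] .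
  also have "\<dots> = Suc (dist C (Inl g) (Inl g'))"
    using cutC[of g y "Inl g'"] assms by (auto simp: verts_corona S_def)
  finally show ?thesis using dist_0[OF reach_Inl[OF assms(1,2)]] assms by fastforce
qed

lemma near: assumes "g \<in> verts G" "y \<in> verts H" shows "dist C (Inl g) (Inr (g,y)) = 1"
  using dist_adj[of C "Inl g" "Inr (g,y)"] assms by (auto simp: verts_corona)

lemma Hres_C1: assumes "nonlocal_resolving_set C X" "g \<in> verts G"
  shows "Hres H {h. Inr (g,h) \<in> X}"
  unfolding Hres_def
proof (intro conjI ballI impI)
  show "{h. Inr (g,h) \<in> X} \<subseteq> verts H" using assms
    by (auto simp: nonlocal_resolving_set_def verts_corona)
  fix a b assume ab: "a \<in> verts H" "b \<in> verts H" "a \<noteq> b \<and> \<not> adj H a b"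
  then have "resolves C X (Inr (g,a)) (Inr (g,b))" using assms
    by (auto simp: nonlocal_resolving_set_def verts_corona)
  then obtain x where x: "x \<in> X" "dist C (Inr (g,a)) x \<noteq> dist C (Inr (g,b)) x"
    unfolding resolves_def by blast
  have xv: "x \<in> verts C" using x assms by (auto simp: nonlocal_resolving_set_def)
  show "\<exists>y\<in>{h. Inr (g,h) \<in> X}. cd H a y \<noteq> cd H b y"
  proof (cases "x \<in> S g")
    case True
    then obtain y where y: "x = Inr (g,y)" "y \<in> verts H" by (auto simp: S_def)
    then show ?thesis using x dist_C[OF assms(2)] ab by auto
  next
    case False
    then show ?thesis using x cutC[OF assms(2) _ xv False] ab by auto
  qed
qed

lemma Hres_C2: assumes "Hres H Y" "y0 \<in> Y"
  shows "nonlocal_resolving_set C (Inr ` (verts G \<times> Y))"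
  unfolding nonlocal_resolving_set_def
proof (intro conjI ballI impI)
  have YH: "Y \<subseteq> verts H" using assms by (auto simp: Hres_def)
  then show "Inr ` (verts G \<times> Y) \<subseteq> verts C" by (auto simp: verts_corona)
  have y0: "y0 \<in> verts H" using YH assms by auto
  fix u v assume uv: "u \<in> verts C" "v \<in> verts C" "u \<noteq> v \<and> \<not> adj C u v"
  have key: "resolves C (Inr ` (verts G \<times> Y)) u v"
    if uv: "u \<in> verts C" "v \<in> verts C" "u \<noteq> v \<and> \<not> adj C u v" and nb: "\<not> (\<exists>h1 h2 g. u = Inr (g,h1) \<and> v = Inr (g,h2))" for u v
  proof -
    consider g where "u = Inl g" "g \<in> verts G" | g a where "u = Inr (g,a)" "g \<in> verts G" "a \<in> verts H"
      using uv by (auto simp: verts_corona)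
    then show ?thesis
    proof cases
      case 1
      have x: "Inr (g, y0) \<in> Inr ` (verts G \<times> Y)" using 1 assms by auto
      have d1: "dist C u (Inr (g,y0)) = 1" using near 1 y0 by simp
      consider g' where "v = Inl g'" "g' \<in> verts G" | g' b where "v = Inr (g',b)" "g' \<in> verts G" "b \<in> verts H"
        using uv by (auto simp: verts_corona)
      then show ?thesis
      proof cases
        case 1
        then have "g \<noteq> g'" using uv \<open>u = Inl g\<close> by auto
        then show ?thesis using far2[of g g' y0] 1 \<open>u = Inl g\<close> \<open>g \<in> verts G\<close> y0 d1 unfolding resolves_def by (intro bexI[OF _ x]) auto
      next
        case 2
        then have "g \<noteq> g'" using uv \<open>u = Inl g\<close> by auto
        then show ?thesis using far[of g g' b y0] \<open>u = Inl g\<close> \<open>g \<in> verts G\<close> 2 y0 d1 unfolding resolves_def by (intro bexI[OF _ x]) auto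
      qed
    next
      case 2
      have x: "Inr (g, y0) \<in> Inr ` (verts G \<times> Y)" using 2 assms by auto
      have d1: "dist C u (Inr (g,y0)) \<le> 2" using dist_C[of g a y0] cd_le[of H a y0] 2 y0 by simp
      consider g' where "v = Inl g'" "g' \<in> verts G" | g' b where "v = Inr (g',b)" "g' \<in> verts G" "b \<in> verts H"
        using uv by (auto simp: verts_corona)
      then show ?thesis
      proof cases
        case 1
        then have "g \<noteq> g'" using uv 2 by auto
        have x': "Inr (g', y0) \<in> Inr ` (verts G \<times> Y)" using 1 assms by auto
        have "dist C v (Inr (g',y0)) = 1" using near 1 y0 by simp
        then show ?thesis using far[of g' g a y0] 2 1 y0 \<open>g \<noteq> g'\<close> unfolding resolves_def by (intro bexI[OF _ x']) auto
      next
        case 3: 2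
        then have "g \<noteq> g'" using nb 2 by auto
        then show ?thesis using far[of g g' b y0] 2 3 y0 d1 unfolding resolves_def by (intro bexI[OF _ x]) auto
      qed
    qed
  qed
  show "resolves C (Inr ` (verts G \<times> Y)) u v"
  proof (cases "\<exists>h1 h2 g. u = Inr (g,h1) \<and> v = Inr (g,h2)")
    case True
    then obtain g a b where e: "u = Inr (g,a)" "v = Inr (g,b)" by blast
    then have abv: "g \<in> verts G" "a \<in> verts H" "b \<in> verts H" using uv by (auto simp: verts_corona)
    then have "a \<noteq> b" "\<not> adj H a b" using uv e by auto
    then obtain y where y: "y \<in> Y" "cd H a y \<noteq> cd H b y" using assms(1) abv unfolding Hres_def by blast
    then show ?thesis unfolding resolves_def using e abv YH dist_C
      by (intro bexI[of _ "Inr (g,y)"]) auto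
  next
    case False
    then show ?thesis using key uv by blast
  qed
qed

end


theorem theorem3p2:
  fixes G :: "'a graph" and H :: "'b graph"
  assumes "simple_graph G" and "connected_graph G"
    and "simple_graph H" and "\<not> complete_graph H"
  shows "nl_dim (corona G H) = card (verts G) * nl_dim (join H K1)"
proof -
  note sG = assms(1) and cG = assms(2) and sH = assms(3)
  have fH: "finite (verts H)" and fG: "finite (verts G)" using sH sG by (auto simp: simple_graph_def)
  define m where "m = (LEAST k. \<exists>Y. Hres H Y \<and> card Y = k)"
  have "\<exists>Y. Hres H Y \<and> card Y = m" unfolding m_def
    by (rule LeastI_ex) (use Hres_verts in blast)
  then obtain Y0 where Y0: "Hres H Y0" "card Y0 = m" by blast
  have mle: "m \<le> card Y" if "Hres H Y" for Y unfolding m_def using that by (intro Least_le) blast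
  have Y0H: "Y0 \<subseteq> verts H" using Y0 by (auto simp: Hres_def)
  have NJ: "nonlocal_resolving_set (join H K1) (Inl ` Y0)" using Hres_J2[OF sH Y0(1)] .
  have cJ: "card (Inl ` Y0 :: ('b + unit) set) = m" using Y0 by (simp add: card_image)
  have J1: "nl_dim (join H K1) \<le> m" unfolding nl_dim_def using NJ cJ by (intro Least_le) blast
  have "\<exists>X. nonlocal_resolving_set (join H K1) X \<and> card X = nl_dim (join H K1)"
    unfolding nl_dim_def by (rule LeastI_ex) (use NJ in blast)
  then obtain XJ where XJ: "nonlocal_resolving_set (join H K1) XJ" "card XJ = nl_dim (join H K1)" by blast
  have fXJ: "finite XJ" using XJ(1) simple_join[OF sH]
    by (meson finite_subset nonlocal_resolving_set_def simple_graph_def)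
  have "m \<le> card {h. Inl h \<in> XJ}" using mle Hres_J1[OF sH XJ(1)] by blast
  also have "card {h. Inl h \<in> XJ} = card (Inl ` {h. Inl h \<in> XJ} :: ('b + unit) set)" by (simp add: card_image)
  also have "card (Inl ` {h. Inl h \<in> XJ} :: ('b + unit) set) \<le> card XJ" using fXJ by (intro card_mono) auto
  finally have J: "nl_dim (join H K1) = m" using J1 XJ(2) by simp
  obtain a b where ab: "a \<in> verts H" "b \<in> verts H" "a \<noteq> b" "\<not> adj H a b"
    using assms(4) unfolding complete_graph_def by blast
  then obtain y0 where y0: "y0 \<in> Y0" using Y0(1) unfolding Hres_def by blast
  have NC: "nonlocal_resolving_set (corona G H) (Inr ` (verts G \<times> Y0))"
    using Hres_C2[OF sG cG sH Y0(1) y0] .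
  have cC: "card (Inr ` (verts G \<times> Y0) :: ('a + 'a \<times> 'b) set) = card (verts G) * m"
    using Y0 by (simp add: card_image card_cartesian_product)
  have C1: "nl_dim (corona G H) \<le> card (verts G) * m"
    unfolding nl_dim_def using NC cC by (intro Least_le) blast
  have "\<exists>X. nonlocal_resolving_set (corona G H) X \<and> card X = nl_dim (corona G H)"
    unfolding nl_dim_def by (rule LeastI_ex) (use NC in blast)
  then obtain XC where XC: "nonlocal_resolving_set (corona G H) XC" "card XC = nl_dim (corona G H)" by blast
  have fXC: "finite XC" using XC(1) simple_corona[OF sG sH]
    by (meson finite_subset nonlocal_resolving_set_def simple_graph_def)
  define Yg where "Yg g = {h. Inr (g,h) \<in> XC}" for g
  have fY: "finite (Yg g)" for g
  proof -
    have "Yg g \<subseteq> verts H" using XC(1) by (auto simp: Yg_def nonlocal_resolving_set_def verts_corona)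
    then show ?thesis using fH finite_subset by blast
  qed
  have "card (verts G) * m = (\<Sum>g\<in>verts G. m)" by simp
  also have "\<dots> \<le> (\<Sum>g\<in>verts G. card (Yg g))"
    using mle Hres_C1[OF sG cG sH XC(1)] by (intro sum_mono) (simp add: Yg_def)
  also have "\<dots> = card (Sigma (verts G) Yg)" using fG fY by (simp add: card_SigmaI)
  also have "\<dots> = card (Inr ` Sigma (verts G) Yg :: ('a + 'a \<times> 'b) set)" by (simp add: card_image)
  also have "\<dots> \<le> card XC" using fXC by (intro card_mono) (auto simp: Yg_def)
  finally show ?thesis using C1 XC(2) J by simp
qed

end
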